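(* Let $K\ge3$, $L\in\{3,\dots,K\}$, and $p_1>p_2\ge\cdots\ge p_K>0$ with $\sum_kp_k=1$. Let $n_1\ge n_2\ge\cdots\ge n_{L-1}\ge1$ and $n$ be integers with $0\le n-\sum_{t=1}^{L-1}n_t\le (K-L+1)\,n_{L-1}$. For every tuple $(i_1,\dots,i_{L-1})$ of distinct indices in $\{1,\dots,K\}$, let $I=\{i_1,\dots,i_{L-1}\}$, $\bar n=n-\sum_{t=1}^{L-1}n_t$, $$S_{i_1,\dots,i_{L-1}}:=\sum_{\mathbf r}\frac{\bar n!}{\prod_{j\notin I}r_j!}\prod_{j\notin I}p_j^{r_j},$$ the sum over $\mathbf r=(r_j)_{j\notin I}$ of nonnegative integers with $\sum_{j\notin I}r_j=\bar n$ and $\max_{j\notin I}r_j\le n_{L-1}$, and $A_{i_1,\dots,i_{L-1}}:=S_{i_1,\dots,i_{L-1}}\prod_{t=1}^{L-1}p_{i_t}^{n_t}$. Then $$\max_{i_2,\dots,i_{L-1}}A_{1,i_2,\dots,i_{L-1}}=A_{1,2,\dots,L-1},\qquad \max_{i_1\ne1}A_{i_1,i_2,\dots,i_{L-1}}=A_{2,1,3,\dots,L-1},$$ where the maxima are over tuples of distinct indices (the first with $i_1=1$ fixed, the second over all tuples with $i_1\ne1$).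
   Context: $n_1,\dots,n_{L-1}$ play the role of the $L-1$ largest occurrence counts among $n$ i.i.d. samples from $(p_1,\dots,p_K)$, so the remaining $\bar n$ samples fall on the other answers each at most $n_{L-1}$ times. *)

theory Defs
  imports Complex_Main
begin

definition trunc_counts :: "nat set \<Rightarrow> nat \<Rightarrow> nat \<Rightarrow> (nat \<Rightarrow> nat) set" where
  "trunc_counts J m N = {r. (\<forall>j. j \<notin> J \<longrightarrow> r j = 0) \<and> (\<forall>j\<in>J. r j \<le> m) \<and> (\<Sum>j\<in>J. r j) = N}"

definition S_sum :: "(nat \<Rightarrow> real) \<Rightarrow> nat set \<Rightarrow> nat \<Rightarrow> nat \<Rightarrow> real" where
  "S_sum p J m N = (\<Sum>r\<in>trunc_counts J m N.
      fact N / (\<Prod>j\<in>J. fact (r j)) * (\<Prod>j\<in>J. p j ^ r j))"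

definition A_val :: "nat \<Rightarrow> nat \<Rightarrow> (nat \<Rightarrow> real) \<Rightarrow> (nat \<Rightarrow> nat) \<Rightarrow> nat \<Rightarrow> (nat \<Rightarrow> nat) \<Rightarrow> real" where
  "A_val K L p nn n i =
     S_sum p ({1..K} - i ` {1..L-1}) (nn (L-1)) (n - (\<Sum>t=1..L-1. nn t))
     * (\<Prod>t=1..L-1. p (i t) ^ nn t)"

definition tuples :: "nat \<Rightarrow> nat \<Rightarrow> (nat \<Rightarrow> nat) set" where
  "tuples K L = {i. (\<forall>t\<in>{1..L-1}. i t \<in> {1..K}) \<and> inj_on i {1..L-1}}"

end

theory Submission
  imports Defs
begin


lemma key_pow:
  fixes x y :: real
  assumes "0 \<le> x" "x \<le> y" "k \<le> e"
  shows "x ^ e * y ^ k \<le> y ^ e * x ^ k"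
proof -
  obtain d where e: "e = k + d" using assms(3) le_Suc_ex by blast
  have "x ^ d \<le> y ^ d" using assms power_mono by blast
  hence "(x ^ k * y ^ k) * x ^ d \<le> (x ^ k * y ^ k) * y ^ d"
    using assms by (intro mult_left_mono) auto
  thus ?thesis unfolding e power_add by (simp add: algebra_simps)
qed

lemma S_nonneg: "(\<forall>x\<in>J. p x \<ge> 0) \<Longrightarrow> S_sum p J m N \<ge> 0"
  unfolding S_sum_def
  by (auto intro!: sum_nonneg mult_nonneg_nonneg divide_nonneg_nonneg prod_nonneg)

lemma S_relabel:
  assumes inv: "\<And>x. \<sigma> (\<sigma> x) = x"
  shows "S_sum p (\<sigma> ` J) m N = S_sum (p \<circ> \<sigma>) J m N"
proof -
  have inj: "inj \<sigma>" by (metis inv injI)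
  have pr: "\<And>f. prod f (\<sigma> ` J) = prod (f \<circ> \<sigma>) J"
    using prod.reindex[OF inj_on_subset[OF inj subset_UNIV]] by blast
  have sm: "\<And>f. sum f (\<sigma> ` J) = sum (f \<circ> \<sigma>) J"
    using sum.reindex[OF inj_on_subset[OF inj subset_UNIV]] by blast
  have memJ: "\<sigma> x \<in> J \<longleftrightarrow> x \<in> \<sigma> ` J" for x
    by (metis image_iff inv)
  show ?thesis
    unfolding S_sum_def
  proof (rule sum.reindex_bij_witness[of _ "\<lambda>r. r \<circ> \<sigma>" "\<lambda>r. r \<circ> \<sigma>"])
    fix r assume "r \<in> trunc_counts (\<sigma> ` J) m N"
    thus "r \<circ> \<sigma> \<circ> \<sigma> = r" by (simp add: fun_eq_iff inv)
    show "r \<circ> \<sigma> \<in> trunc_counts J m N"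
      using \<open>r \<in> _\<close> unfolding trunc_counts_def
      apply (simp add: sm comp_def)
      by (metis memJ inv)
    show "fact N / (\<Prod>j\<in>J. fact ((r \<circ> \<sigma>) j)) * (\<Prod>j\<in>J. (p \<circ> \<sigma>) j ^ (r \<circ> \<sigma>) j) =
          fact N / (\<Prod>j\<in>\<sigma> ` J. fact (r j)) * (\<Prod>j\<in>\<sigma> ` J. p j ^ r j)"
      by (simp add: pr comp_def)
  next
    fix r assume "r \<in> trunc_counts J m N"
    thus "r \<circ> \<sigma> \<circ> \<sigma> = r" by (simp add: fun_eq_iff inv)
    show "r \<circ> \<sigma> \<in> trunc_counts (\<sigma> ` J) m N"
      using \<open>r \<in> _\<close> unfolding trunc_counts_def
      by (auto simp: memJ sm inv comp_def)
  qed
qed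

lemma S_compare:
  assumes fin: "finite J" and aJ: "a \<in> J" and qp: "\<forall>x\<in>J-{a}. q x = p x"
    and nn: "\<forall>x\<in>J. p x \<ge> 0" and le: "p a \<le> q a" and me: "m \<le> e"
  shows "p a ^ e * S_sum q J m N \<le> q a ^ e * S_sum p J m N"
  unfolding S_sum_def sum_distrib_left
proof (rule sum_mono)
  fix r assume r: "r \<in> trunc_counts J m N"
  hence ra: "r a \<le> e" using aJ me unfolding trunc_counts_def by auto
  define C where "C = fact N / (\<Prod>j\<in>J. fact (r j) :: real)"
  define P0 where "P0 = (\<Prod>j\<in>J-{a}. p j ^ r j)"
  have C0: "C \<ge> 0" unfolding C_def by (auto intro!: divide_nonneg_nonneg prod_nonneg)
  have P00: "P0 \<ge> 0" unfolding P0_def using nn by (auto intro!: prod_nonneg)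
  have pa: "p a \<ge> 0" using nn aJ by auto
  have eq1: "(\<Prod>j\<in>J. p j ^ r j) = p a ^ r a * P0"
    unfolding P0_def using prod.remove[OF fin aJ] .
  have eq2: "(\<Prod>j\<in>J. q j ^ r j) = q a ^ r a * P0"
    unfolding P0_def using prod.remove[OF fin aJ, of "\<lambda>j. q j ^ r j"] qp by simp
  have k: "p a ^ e * q a ^ r a \<le> q a ^ e * p a ^ r a"
    using key_pow[OF pa le ra] .
  have "p a ^ e * (C * (q a ^ r a * P0)) = (p a ^ e * q a ^ r a) * (C * P0)" by simp
  also have "\<dots> \<le> (q a ^ e * p a ^ r a) * (C * P0)"
    using k C0 P00 by (intro mult_right_mono) auto
  also have "\<dots> = q a ^ e * (C * (p a ^ r a * P0))" by simp
  finally show "p a ^ e * (fact N / (\<Prod>j\<in>J. fact (r j)) * (\<Prod>j\<in>J. q j ^ r j))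
     \<le> q a ^ e * (fact N / (\<Prod>j\<in>J. fact (r j)) * (\<Prod>j\<in>J. p j ^ r j))"
    unfolding eq1 eq2 C_def .
qed

lemma A_cong:
  assumes "\<forall>t\<in>{1..L-1}. i t = g t"
  shows "A_val K L p nn n i = A_val K L p nn n g"
proof -
  have "i ` {1..L-1} = g ` {1..L-1}" using assms by (auto intro: image_cong)
  moreover have "(\<Prod>t=1..L-1. p (i t) ^ nn t) = (\<Prod>t=1..L-1. p (g t) ^ nn t)"
    using assms by (auto intro: prod.cong)
  ultimately show ?thesis unfolding A_val_def by simp
qed




locale LS =
  fixes K L n :: nat and p :: "nat \<Rightarrow> real" and nn :: "nat \<Rightarrow> nat"
  assumes K3: "K \<ge> 3" and L3: "3 \<le> L" and LK: "L \<le> K"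
    and p12: "p 1 > p 2"
    and pmono: "\<And>k. 2 \<le> k \<Longrightarrow> k < K \<Longrightarrow> p k \<ge> p (Suc k)"
    and pK: "p K > 0"
    and nnmono: "\<And>t. 1 \<le> t \<Longrightarrow> t < L - 1 \<Longrightarrow> nn t \<ge> nn (Suc t)"
begin

abbreviation "A \<equiv> A_val K L p nn n"

lemma p_anti: "2 \<le> a \<Longrightarrow> a \<le> b \<Longrightarrow> b \<le> K \<Longrightarrow> p b \<le> p a"
proof (induction b)
  case 0 thus ?case by simp
next
  case (Suc b) show ?case
  proof (cases "a = Suc b")
    case True thus ?thesis by simp
  next
    case False
    hence "a \<le> b" using Suc by simp
    hence "p b \<le> p a" using Suc by simp
    moreover have "p (Suc b) \<le> p b" using pmono[of b] Suc \<open>a\<le>b\<close> by simp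
    ultimately show ?thesis by linarith
  qed
qed

lemma p_pos: "1 \<le> k \<Longrightarrow> k \<le> K \<Longrightarrow> p k > 0"
proof (cases "k = 1")
  case True
  have "p K \<le> p 2" using p_anti[of 2 K] K3 by simp
  thus ?thesis using True p12 pK by simp
next
  case False
  assume "1 \<le> k" "k \<le> K"
  thus ?thesis using p_anti[of k K] False pK by simp
qed

lemma p_le1: "1 \<le> k \<Longrightarrow> k \<le> K \<Longrightarrow> p k \<le> p 1"
  using p_anti[of 2 k] p12 by (cases "k = 1") auto

lemma nn_anti: "1 \<le> s \<Longrightarrow> s \<le> t \<Longrightarrow> t \<le> L-1 \<Longrightarrow> nn t \<le> nn s"
proof (induction t)
  case 0 thus ?case by simp
next
  case (Suc t) show ?case
  proof (cases "s = Suc t")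
    case True thus ?thesis by simp
  next
    case False
    hence "s \<le> t" using Suc by simp
    hence "nn t \<le> nn s" using Suc by simp
    moreover have "nn (Suc t) \<le> nn t" using nnmono[of t] Suc \<open>s\<le>t\<close> by simp
    ultimately show ?thesis by linarith
  qed
qed

lemma E1:
  assumes i: "i \<in> tuples K L" and t: "t \<in> {1..L-1}" and j: "j \<in> {1..K}"
    and jn: "j \<notin> i ` {1..L-1}" and le: "p (i t) \<le> p j"
  shows "i(t:=j) \<in> tuples K L \<and> A i \<le> A (i(t:=j))"
proof -
  define a where "a = i t"
  define I where "I = i ` {1..L-1}"
  define J where "J = {1..K} - I"
  define J' where "J' = {1..K} - (i(t:=j)) ` {1..L-1}"
  define J0 where "J0 = J - {j}"
  define N where "N = n - (\<Sum>t=1..L-1. nn t)"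
  define m where "m = nn (L-1)"
  have inj: "inj_on i {1..L-1}" and rng: "\<forall>s\<in>{1..L-1}. i s \<in> {1..K}"
    using i unfolding tuples_def by auto
  have aK: "a \<in> {1..K}" using rng t a_def by auto
  have aI: "a \<in> I" using t a_def I_def by auto
  have aj: "a \<noteq> j" using aI jn I_def by auto
  have img: "(i(t:=j)) ` {1..L-1} = insert j (I - {a})"
  proof -
    have "(i(t:=j)) ` {1..L-1} = insert j (i ` ({1..L-1} - {t}))"
      using t by (auto simp: image_iff)
    also have "i ` ({1..L-1} - {t}) = I - {a}"
      unfolding I_def a_def using inj t by (simp add: inj_on_image_set_diff)
    finally show ?thesis .
  qed
  have J'eq: "J' = insert a J0"
    unfolding J'_def J0_def J_def img using aK aI aj by auto
  define \<sigma> where "\<sigma> = (\<lambda>x. if x = a then j else if x = j then a else x)"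
  have inv: "\<And>x. \<sigma> (\<sigma> x) = x" unfolding \<sigma>_def by auto
  have aJ0: "a \<notin> J0" "j \<notin> J0" using aI unfolding J0_def J_def by auto
  have "\<sigma> ` J' = insert j (\<sigma> ` J0)" unfolding J'eq \<sigma>_def using aJ0 by auto
  also have "\<sigma> ` J0 = J0" using aJ0 unfolding \<sigma>_def by (auto simp: image_iff)
  also have "insert j J0 = J" using j jn unfolding J0_def J_def I_def by auto
  finally have sJ: "\<sigma> ` J' = J" .
  have S1: "S_sum p J m N = S_sum (p \<circ> \<sigma>) J' m N"
    using S_relabel[OF inv, of p J' m N] sJ by simp
  have pnn: "\<forall>x\<in>J'. p x \<ge> 0" using p_pos unfolding J'_def by (auto simp: less_imp_le)
  have pa0: "0 \<le> p a" using p_pos aK by (auto simp: less_imp_le)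
  have me: "m \<le> nn t" unfolding m_def using nn_anti[of t "L-1"] t by auto
  have cmp: "p a ^ nn t * S_sum (p \<circ> \<sigma>) J' m N \<le> (p \<circ> \<sigma>) a ^ nn t * S_sum p J' m N"
  proof (rule S_compare)
    show "finite J'" unfolding J'_def by simp
    show "a \<in> J'" using J'eq by simp
    show "\<forall>x\<in>J' - {a}. (p \<circ> \<sigma>) x = p x" using J'eq aJ0 unfolding \<sigma>_def by auto
    show "\<forall>x\<in>J'. 0 \<le> p x" by fact
    show "p a \<le> (p \<circ> \<sigma>) a" using le unfolding \<sigma>_def a_def by simp
    show "m \<le> nn t" by fact
  qed
  have cmp': "S_sum p J m N * p a ^ nn t \<le> S_sum p J' m N * p j ^ nn t"
    using cmp S1 unfolding \<sigma>_def by (simp add: mult.commute)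
  define R where "R = (\<Prod>s\<in>{1..L-1}-{t}. p (i s) ^ nn s)"
  have R0: "R \<ge> 0" unfolding R_def using rng p_pos by (auto intro!: prod_nonneg simp: less_imp_le)
  have P1: "(\<Prod>s=1..L-1. p (i s) ^ nn s) = p a ^ nn t * R"
    unfolding R_def a_def using prod.remove[of "{1..L-1}" t] t by simp
  have P2: "(\<Prod>s=1..L-1. p ((i(t:=j)) s) ^ nn s) = p j ^ nn t * R"
    unfolding R_def using prod.remove[of "{1..L-1}" t "\<lambda>s. p ((i(t:=j)) s) ^ nn s"] t by simp
  have "A i = S_sum p J m N * p a ^ nn t * R"
    unfolding A_val_def P1 J_def I_def m_def N_def by simp
  also have "\<dots> \<le> S_sum p J' m N * p j ^ nn t * R"
    using cmp' R0 by (rule mult_right_mono)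
  also have "\<dots> = A (i(t:=j))"
    unfolding A_val_def P2 J'_def m_def N_def by simp
  finally have "A i \<le> A (i(t:=j))" .
  moreover have "i(t:=j) \<in> tuples K L"
    unfolding tuples_def using rng j jn inj by (auto intro!: inj_on_fun_updI)
  ultimately show ?thesis by simp
qed

end


context LS begin

lemma E2:
  assumes i: "i \<in> tuples K L" and s: "s \<in> {1..L-1}" and t: "t \<in> {1..L-1}"
    and st: "s < t" and le: "p (i s) \<le> p (i t)"
  shows "i(s := i t, t := i s) \<in> tuples K L \<and> A i \<le> A (i(s := i t, t := i s))"
proof -
  define i' where "i' = i(s := i t, t := i s)"
  have inj: "inj_on i {1..L-1}" and rng: "\<forall>s\<in>{1..L-1}. i s \<in> {1..K}"
    using i unfolding tuples_def by auto
  have img: "i' ` {1..L-1} = i ` {1..L-1}"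
  proof
    show "i' ` {1..L-1} \<subseteq> i ` {1..L-1}" unfolding i'_def using s t by auto
    show "i ` {1..L-1} \<subseteq> i' ` {1..L-1}"
    proof
      fix x assume "x \<in> i ` {1..L-1}"
      then obtain u where u: "u \<in> {1..L-1}" "x = i u" by auto
      show "x \<in> i' ` {1..L-1}"
      proof (cases "u = s")
        case True thus ?thesis using u t st unfolding i'_def by (intro rev_image_eqI[of t]) auto
      next
        case False
        show ?thesis
        proof (cases "u = t")
          case True thus ?thesis using u s st unfolding i'_def by (intro rev_image_eqI[of s]) auto
        next
          case False
          thus ?thesis using u \<open>u \<noteq> s\<close> unfolding i'_def by (intro rev_image_eqI[of u]) auto
        qed
      qed
    qed
  qed
  have tup: "i' \<in> tuples K L"
    unfolding tuples_def
  proof safe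
    fix u assume "u \<in> {1..L-1}" thus "i' u \<in> {1..K}" using rng s t unfolding i'_def by auto
  next
    show "inj_on i' {1..L-1}" unfolding i'_def inj_on_def
    proof (intro ballI impI)
      fix x y assume "x \<in> {1..L-1}" "y \<in> {1..L-1}"
        "(i(s := i t, t := i s)) x = (i(s := i t, t := i s)) y"
      thus "x = y" using s t st
        by (auto simp: inj_on_eq_iff[OF inj] split: if_splits)
    qed
  qed
  define R where "R = (\<Prod>u\<in>{1..L-1}-{s}-{t}. p (i u) ^ nn u)"
  have R0: "R \<ge> 0" unfolding R_def using rng p_pos by (auto intro!: prod_nonneg simp: less_imp_le)
  have tin: "t \<in> {1..L-1} - {s}" using t st by auto
  have P1: "(\<Prod>u=1..L-1. p (i u) ^ nn u) = p (i s) ^ nn s * (p (i t) ^ nn t * R)"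
    unfolding R_def using prod.remove[of "{1..L-1}" s "\<lambda>u. p (i u) ^ nn u"]
      prod.remove[of "{1..L-1}-{s}" t "\<lambda>u. p (i u) ^ nn u"] s tin
    by simp
  have P2: "(\<Prod>u=1..L-1. p (i' u) ^ nn u) = p (i t) ^ nn s * (p (i s) ^ nn t * R)"
  proof -
    have "(\<Prod>u=1..L-1. p (i' u) ^ nn u) = p (i' s) ^ nn s * (p (i' t) ^ nn t *
        (\<Prod>u\<in>{1..L-1}-{s}-{t}. p (i' u) ^ nn u))"
      using prod.remove[of "{1..L-1}" s "\<lambda>u. p (i' u) ^ nn u"]
        prod.remove[of "{1..L-1}-{s}" t "\<lambda>u. p (i' u) ^ nn u"] s tin by simp
    moreover have "(\<Prod>u\<in>{1..L-1}-{s}-{t}. p (i' u) ^ nn u) = R"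
      unfolding R_def i'_def by (rule prod.cong) auto
    ultimately show ?thesis unfolding i'_def using st by simp
  qed
  have pis: "0 \<le> p (i s)" using rng s p_pos by (auto simp: less_imp_le)
  have nst: "nn t \<le> nn s" using nn_anti[of s t] s t st by auto
  have k: "p (i s) ^ nn s * p (i t) ^ nn t \<le> p (i t) ^ nn s * p (i s) ^ nn t"
    using key_pow[OF pis le nst] .
  have "(\<Prod>u=1..L-1. p (i u) ^ nn u) \<le> (\<Prod>u=1..L-1. p (i' u) ^ nn u)"
    unfolding P1 P2 using mult_right_mono[OF k R0] by (simp add: mult.assoc)
  moreover have "S_sum p ({1..K} - i ` {1..L-1}) (nn (L-1)) (n - (\<Sum>t=1..L-1. nn t)) \<ge> 0"
    using p_pos by (intro S_nonneg) (auto simp: less_imp_le)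
  ultimately have "A i \<le> A i'"
    unfolding A_val_def img by (rule mult_left_mono)
  thus ?thesis using tup unfolding i'_def by simp
qed

lemma step_lem:
  assumes i: "i \<in> tuples K L" and t: "2 \<le> t" "t \<le> L-1"
    and pre: "i ` {1..t-1} = {1..t-1}"
  shows "\<exists>i'\<in>tuples K L. (\<forall>u\<in>{1..t-1}. i' u = i u) \<and> i' t = t \<and> A i \<le> A i'"
proof (cases "i t = t")
  case True thus ?thesis using i by blast
next
  case False
  have inj: "inj_on i {1..L-1}" and rng: "\<forall>s\<in>{1..L-1}. i s \<in> {1..K}"
    using i unfolding tuples_def by auto
  have "i t \<notin> i ` {1..t-1}"
  proof -
    have "{1..t-1} \<subseteq> {1..L-1}" "t \<in> {1..L-1}" using t by auto
    from inj_on_image_mem_iff[OF inj this(2,1)] show ?thesis by auto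
  qed
  hence "i t \<notin> {1..t-1}" using pre by simp
  moreover have "i t \<in> {1..K}" using rng t by auto
  ultimately have gt: "t < i t" "i t \<le> K" using False by auto
  have ple: "p (i t) \<le> p t" using p_anti[of t "i t"] gt t by auto
  show ?thesis
  proof (cases "t \<in> i ` {1..L-1}")
    case True
    then obtain s where s: "s \<in> {1..L-1}" "i s = t" by auto
    have "s \<notin> {1..t-1}"
    proof
      assume "s \<in> {1..t-1}"
      hence "i s \<in> {1..t-1}" using pre by blast
      thus False using s t by auto
    qed
    moreover have "s \<noteq> t" using s False by auto
    ultimately have "t < s" using s t by auto
    have "t \<in> {1..L-1}" using t by auto
    from E2[OF i this s(1) \<open>t < s\<close>] ple s
    have "i(t := i s, s := i t) \<in> tuples K L \<and> A i \<le> A (i(t := i s, s := i t))" by simp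
    thus ?thesis using \<open>t < s\<close> s
      by (intro bexI[of _ "i(t := i s, s := i t)"]) auto
  next
    case False
    have "t \<in> {1..L-1}" "t \<in> {1..K}" using t LK by auto
    from E1[OF i this False ple]
    show ?thesis by (intro bexI[of _ "i(t := t)"]) auto
  qed
qed

end


context LS begin

lemma prefix:
  assumes gimg: "\<And>k. 2 \<le> k \<Longrightarrow> k \<le> L-1 \<Longrightarrow> g ` {1..k} = {1..k}"
    and gid: "\<And>t. 3 \<le> t \<Longrightarrow> t \<le> L-1 \<Longrightarrow> g t = t"
    and k: "2 \<le> k" "k \<le> L-1"
  shows "\<forall>i\<in>tuples K L. (\<forall>t\<in>{1..k}. i t = g t) \<longrightarrow> A i \<le> A g"
  using k(2)
proof (induction k rule: inc_induct)
  case base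
  show ?case using A_cong[of L] by (metis order_refl)
next
  case (step m)
  show ?case
  proof (intro ballI impI)
    fix i assume i: "i \<in> tuples K L" and ag: "\<forall>t\<in>{1..m}. i t = g t"
    have "i ` {1..m} = g ` {1..m}" using ag by (auto intro: image_cong)
    also have "\<dots> = {1..m}" using gimg[of m] k step by auto
    finally have pre: "i ` {1..Suc m - 1} = {1..Suc m - 1}" by simp
    obtain i' where i': "i' \<in> tuples K L" "\<forall>u\<in>{1..Suc m - 1}. i' u = i u" "i' (Suc m) = Suc m"
      "A i \<le> A i'"
      using step_lem[OF i _ _ pre] k step by auto
    have "\<forall>t\<in>{1..Suc m}. i' t = g t"
    proof
      fix t assume t: "t \<in> {1..Suc m}"
      show "i' t = g t"
      proof (cases "t = Suc m")
        case True thus ?thesis using i'(3) gid[of "Suc m"] k step by auto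
      next
        case False thus ?thesis using t i'(2) ag by auto
      qed
    qed
    hence "A i' \<le> A g" using step.IH i'(1) by blast
    thus "A i \<le> A g" using i'(4) by linarith
  qed
qed
end


context LS begin

lemma claim1:
  shows "(\<lambda>t. t) \<in> tuples K L \<and> (\<forall>i\<in>tuples K L. i 1 = 1 \<longrightarrow> A i \<le> A (\<lambda>t. t))"
proof
  show "(\<lambda>t. t) \<in> tuples K L" unfolding tuples_def using LK by auto
  show "\<forall>i\<in>tuples K L. i 1 = 1 \<longrightarrow> A i \<le> A (\<lambda>t. t)"
  proof (intro ballI impI)
    fix i assume i: "i \<in> tuples K L" and i1: "i 1 = 1"
    have pre: "i ` {1..2-1} = {1..2-1}" using i1 by simp
    obtain i' where i': "i' \<in> tuples K L" "\<forall>u\<in>{1..2-1}. i' u = i u" "i' 2 = 2" "A i \<le> A i'"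
    proof -
      have "2 \<le> L-1" using L3 by arith
      from step_lem[OF i order_refl this pre] show ?thesis using that by auto
    qed
    have ag: "\<forall>t\<in>{1..2}. i' t = t"
    proof
      fix t :: nat assume "t \<in> {1..2}"
      hence "t = 1 \<or> t = 2" by auto
      thus "i' t = t" using i' i1 by auto
    qed
    have "A i' \<le> A (\<lambda>t. t)"
      using prefix[of "\<lambda>t. t" 2] L3 ag i'(1) by auto
    thus "A i \<le> A (\<lambda>t. t)" using i'(4) by linarith
  qed
qed

lemma claim2:
  defines "g \<equiv> (\<lambda>t::nat. if t = 1 then 2 else if t = 2 then 1 else t)"
  shows "g \<in> tuples K L \<and> (\<forall>i\<in>tuples K L. i 1 \<noteq> 1 \<longrightarrow> A i \<le> A g)"
proof
  show "g \<in> tuples K L" unfolding tuples_def g_def using LK L3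
    by (auto simp: inj_on_def)
  have gimg: "g ` {1..k} = {1..k}" if "2 \<le> k" for k
  proof
    show "g ` {1..k} \<subseteq> {1..k}" using that unfolding g_def by auto
    show "{1..k} \<subseteq> g ` {1..k}"
    proof
      fix x assume x: "x \<in> {1..k}"
      show "x \<in> g ` {1..k}"
      proof (cases "x = 1")
        case True thus ?thesis using that unfolding g_def by (intro rev_image_eqI[of 2]) auto
      next
        case False
        show ?thesis
        proof (cases "x = 2")
          case True thus ?thesis using that unfolding g_def by (intro rev_image_eqI[of 1]) auto
        next
          case False thus ?thesis using x \<open>x \<noteq> 1\<close> unfolding g_def by (intro rev_image_eqI[of x]) auto
        qed
      qed
    qed
  qed
  have gid: "\<And>t. 3 \<le> t \<Longrightarrow> t \<le> L-1 \<Longrightarrow> g t = t" unfolding g_def by auto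
  show "\<forall>i\<in>tuples K L. i 1 \<noteq> 1 \<longrightarrow> A i \<le> A g"
  proof (intro ballI impI)
    fix i assume i: "i \<in> tuples K L" and i1: "i 1 \<noteq> 1"
    have inj: "inj_on i {1..L-1}" and rng: "\<forall>s\<in>{1..L-1}. i s \<in> {1..K}"
      using i unfolding tuples_def by auto
    have m1: "1 \<in> {1..L-1}" and m2: "2 \<in> {1..L-1}" using L3 by auto
    obtain i2 where i2: "i2 \<in> tuples K L" "i2 1 \<noteq> 1" "i2 2 = 1" "A i \<le> A i2"
    proof (cases "1 \<in> i ` {1..L-1}")
      case True
      then obtain s where s: "s \<in> {1..L-1}" "i s = 1" by auto
      show ?thesis
      proof (cases "s = 2")
        case True thus ?thesis using that[of i] i i1 s by auto
      next
        case False
        hence "2 < s" using s i1 by (cases "s = 1") auto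
        have "p (i 2) \<le> p (i s)" using s p_le1 rng m2 by auto
        from E2[OF i m2 s(1) \<open>2 < s\<close> this]
        show ?thesis using \<open>2 < s\<close> s i1 by (intro that[of "i(2 := i s, s := i 2)"]) auto
      qed
    next
      case False
      have "p (i 2) \<le> p 1" using p_le1 rng m2 by auto
      from E1[OF i m2 _ False this]
      show ?thesis using i1 K3 by (intro that[of "i(2 := 1)"]) auto
    qed
    have inj2: "inj_on i2 {1..L-1}" and rng2: "\<forall>s\<in>{1..L-1}. i2 s \<in> {1..K}"
      using i2(1) unfolding tuples_def by auto
    obtain i3 where i3: "i3 \<in> tuples K L" "i3 1 = 2" "i3 2 = 1" "A i2 \<le> A i3"
    proof (cases "i2 1 = 2")
      case True thus ?thesis using that[of i2] i2 by auto
    next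
      case False
      have "i2 1 \<noteq> i2 2" using inj_on_eq_iff[OF inj2 m1 m2] by simp
      moreover have "1 \<le> i2 1" using rng2 m1 by auto
      ultimately have "3 \<le> i2 1" using False i2 by linarith
      hence ple: "p (i2 1) \<le> p 2" using p_anti[of 2 "i2 1"] rng2 m1 by auto
      show ?thesis
      proof (cases "2 \<in> i2 ` {1..L-1}")
        case True
        then obtain s where s: "s \<in> {1..L-1}" "i2 s = 2" by auto
        have "s \<noteq> 1" "s \<noteq> 2" using s False i2 by auto
        hence "1 < s" using s by auto
        from E2[OF i2(1) m1 s(1) \<open>1 < s\<close>] ple s
        show ?thesis using \<open>1 < s\<close> \<open>s \<noteq> 2\<close> s i2 by (intro that[of "i2(1 := i2 s, s := i2 1)"]) auto
      next
        case False
        from E1[OF i2(1) m1 _ False ple]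
        show ?thesis using i2 K3 by (intro that[of "i2(1 := 2)"]) auto
      qed
    qed
    have ag: "\<forall>t\<in>{1..2}. i3 t = g t"
    proof
      fix t :: nat assume "t \<in> {1..2}"
      hence "t = 1 \<or> t = 2" by auto
      thus "i3 t = g t" using i3 unfolding g_def by auto
    qed
    have "A i3 \<le> A g"
      using prefix[of g 2] gimg gid L3 ag i3(1) by auto
    thus "A i \<le> A g" using i2(4) i3(4) by linarith
  qed
qed

end

theorem lemma2:
  fixes K L n :: nat and p :: "nat \<Rightarrow> real" and nn :: "nat \<Rightarrow> nat"
  assumes "K \<ge> 3" and "3 \<le> L" and "L \<le> K"
    and "p 1 > p 2"
    and "\<And>k. 2 \<le> k \<Longrightarrow> k < K \<Longrightarrow> p k \<ge> p (Suc k)"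
    and "p K > 0"
    and "(\<Sum>k=1..K. p k) = 1"
    and "\<And>t. 1 \<le> t \<Longrightarrow> t < L - 1 \<Longrightarrow> nn t \<ge> nn (Suc t)"
    and "nn (L-1) \<ge> 1"
    and "(\<Sum>t=1..L-1. nn t) \<le> n"
    and "n - (\<Sum>t=1..L-1. nn t) \<le> (K - L + 1) * nn (L-1)"
  shows "(\<lambda>t. t) \<in> tuples K L
     \<and> (\<forall>i\<in>tuples K L. i 1 = 1 \<longrightarrow> A_val K L p nn n i \<le> A_val K L p nn n (\<lambda>t. t))
     \<and> (\<lambda>t. if t = 1 then 2 else if t = 2 then 1 else t) \<in> tuples K L
     \<and> (\<forall>i\<in>tuples K L. i 1 \<noteq> 1 \<longrightarrow>
          A_val K L p nn n i \<le> A_val K L p nn n (\<lambda>t. if t = 1 then 2 else if t = 2 then 1 else t))"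
  proof -
  interpret LS K L n p nn using assms by unfold_locales auto
  show ?thesis using claim1 claim2 by simp
qed

end
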